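(* Let $h:\mathbb{R}^d\to\mathbb{R}$ be convex, and let $\mathcal{S}=\{x:h(x)\le0\}$ be nonempty. Let $\mathcal{K}$ be a convex set with $\mathcal{S}\subseteq\mathcal{K}$. Assume there are $G,\sigma>0$ such that: - for all $x\in\mathcal{K}$ and all $s\in\partial h(x)$, $\|s\|\le G$; - whenever $x\in\mathcal{K}$ and $h(x)=0$, $\|s\|\ge\sigma$ for all $s\in\partial h(x)$. Let $x\in\mathcal{K}$ with $h(x)>0$, let $z=\Pi_{\mathcal{S}}(x)$, and let $s_x\in\partial h(x)$. Then there exist $\gamma\ge0$ and $s_z\in\partial h(z)$ such that: 1. $h(z)=0$; 2. $x-z=\gamma\frac{s_z}{\|s_z\|}$; 3. $\gamma\le\frac{h(x)}{\|s_z\|}$; 4. $\|s_z\|^2\le s_x^\top s_z$; 5. $\|s_x\|\ge\|s_z\|$.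
   Context: $\|\cdot\|$ is the Euclidean norm, $\Pi_{\mathcal{S}}$ is the Euclidean projection onto the closed convex set $\mathcal{S}$, and $\partial h(x)$ is the subdifferential of $h$ at $x$. *)

theory Defs
  imports "HOL-Analysis.Analysis"
begin

definition subdiff :: "('a::real_inner \<Rightarrow> real) \<Rightarrow> 'a \<Rightarrow> 'a set" where
  "subdiff h x = {s. \<forall>y. h y \<ge> h x + s \<bullet> (y - x)}"

end

theory Submission
  imports Defs
begin

lemma halfspace_mult:
  fixes a n :: "'a::real_inner"
  assumes n0: "n \<noteq> 0" and H: "\<And>w. n \<bullet> w > 0 \<Longrightarrow> a \<bullet> w \<ge> 0"
  shows "a = ((a \<bullet> n) / (n \<bullet> n)) *\<^sub>R n \<and> a \<bullet> n \<ge> 0"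
proof -
  define t where "t = (a \<bullet> n) / (n \<bullet> n)"
  define p where "p = a - t *\<^sub>R n"
  have nn: "n \<bullet> n > 0" using n0 by simp
  have pn: "p \<bullet> n = 0" unfolding p_def t_def using nn by (simp add: inner_diff_left)
  have ap: "a \<bullet> p = p \<bullet> p" unfolding p_def using pn
    by (simp add: inner_diff_left inner_diff_right inner_commute p_def)
  have an: "a \<bullet> n = t * (n \<bullet> n)" unfolding t_def using nn by simp
  have "p = 0"
  proof (rule ccontr)
    assume "p \<noteq> 0"
    then have pp: "p \<bullet> p > 0" by simp
    define k where "k = (t * (n \<bullet> n) + 1) / (p \<bullet> p)"
    define w where "w = n - k *\<^sub>R p"
    have "n \<bullet> w = n \<bullet> n" unfolding w_def using pn by (simp add: inner_diff_right inner_commute)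
    then have "a \<bullet> w \<ge> 0" using H nn by simp
    moreover have "a \<bullet> w = t * (n \<bullet> n) - k * (p \<bullet> p)"
      unfolding w_def using an ap by (simp add: inner_diff_right)
    moreover have "k * (p \<bullet> p) = t * (n \<bullet> n) + 1" unfolding k_def using pp by simp
    ultimately show False by simp
  qed
  moreover have "a \<bullet> n \<ge> 0" using H[of n] nn by simp
  ultimately show ?thesis unfolding p_def t_def by simp
qed

theorem lemma3:
  fixes h :: "'a::euclidean_space \<Rightarrow> real"
    and K :: "'a set" and G \<sigma> :: real and x s_x :: 'a
  assumes hconv: "convex_on UNIV h"
    and Sne: "{y. h y \<le> 0} \<noteq> {}"
    and Kconv: "convex K"
    and SK: "{y. h y \<le> 0} \<subseteq> K"
    and Gpos: "G > 0" and sigpos: "\<sigma> > 0"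
    and bound: "\<forall>y\<in>K. \<forall>s\<in>subdiff h y. norm s \<le> G"
    and lower: "\<forall>y\<in>K. h y = 0 \<longrightarrow> (\<forall>s\<in>subdiff h y. norm s \<ge> \<sigma>)"
    and xK: "x \<in> K" and hx: "h x > 0"
    and sx: "s_x \<in> subdiff h x"
  shows "\<exists>\<gamma> s_z. \<gamma> \<ge> 0 \<and> s_z \<in> subdiff h (closest_point {y. h y \<le> 0} x) \<and>
           h (closest_point {y. h y \<le> 0} x) = 0 \<and>
           x - closest_point {y. h y \<le> 0} x = (\<gamma> / norm s_z) *\<^sub>R s_z \<and>
           \<gamma> \<le> h x / norm s_z \<and>
           (norm s_z)\<^sup>2 \<le> s_x \<bullet> s_z \<and>
           norm s_x \<ge> norm s_z"
proof -
  define S where "S = {y. h y \<le> 0}"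
  define z where "z = closest_point S x"
  define n where "n = x - z"
  have cont: "continuous_on UNIV h" using convex_on_continuous[OF open_UNIV hconv] .
  have clS: "closed S" unfolding S_def
    using closed_Collect_le[OF cont continuous_on_const, of 0] by simp
  have cvS: "convex S" unfolding S_def convex_alt
  proof (intro ballI allI impI)
    fix y1 y2 and u :: real assume y: "y1 \<in> {y. h y \<le> 0}" "y2 \<in> {y. h y \<le> 0}" and u: "0 \<le> u \<and> u \<le> 1"
    have "h ((1 - u) *\<^sub>R y1 + u *\<^sub>R y2) \<le> (1 - u) * h y1 + u * h y2"
      using convex_onD[OF hconv] u by simp
    also have "\<dots> \<le> 0" using y u by (simp add: add_nonpos_nonpos mult_nonneg_nonpos)
    finally show "(1 - u) *\<^sub>R y1 + u *\<^sub>R y2 \<in> {y. h y \<le> 0}" by simp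
  qed
  have SneS: "S \<noteq> {}" using Sne S_def by simp
  have zS: "z \<in> S" and zcl: "\<forall>y\<in>S. dist x z \<le> dist x y"
    using closest_point_exists[OF clS SneS] unfolding z_def by auto
  have xz: "x \<noteq> z" using zS hx S_def by auto
  have n0: "n \<noteq> 0" using xz n_def by simp
  have nn: "n \<bullet> n > 0" using n0 by simp
  have hz: "h z = 0"
  proof (rule ccontr)
    assume "h z \<noteq> 0"
    then have hzn: "h z < 0" using zS S_def by simp
    define e where "e = - h z / (h x - h z)"
    have e0: "0 < e" "e < 1" unfolding e_def using hzn hx by (auto simp: field_simps)
    define z' where "z' = (1 - e) *\<^sub>R z + e *\<^sub>R x"
    have "h z' \<le> (1 - e) * h z + e * h x"
      unfolding z'_def using convex_onD[OF hconv] e0 by simp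
    also have "\<dots> = 0" unfolding e_def using hzn hx by (simp add: field_simps)
    finally have "z' \<in> S" using S_def by simp
    then have "dist x z \<le> dist x z'" using zcl by blast
    moreover have "x - z' = (1 - e) *\<^sub>R (x - z)" unfolding z'_def by (simp add: algebra_simps)
    then have "dist x z' = (1 - e) * dist x z" using e0 by (simp add: dist_norm)
    moreover have "dist x z > 0" using xz by simp
    ultimately show False using e0 by (simp add: mult_le_cancel_right1)
  qed
  have proj: "\<And>y. y \<in> S \<Longrightarrow> n \<bullet> (y - z) \<le> 0"
    unfolding n_def using any_closest_point_dot[OF cvS clS zS _ zcl] by blast
  define A :: "('a \<times> real) set" where "A = {p. h (fst p) < snd p}"
  define B :: "('a \<times> real) set" where "B = {p. n \<bullet> (fst p - z) > 0 \<and> snd p \<le> 0}"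
  have cvA: "convex A" unfolding A_def convex_alt
  proof (intro ballI allI impI)
    fix p q :: "'a \<times> real" and u :: real
    assume p: "p \<in> {p. h (fst p) < snd p}" and q: "q \<in> {p. h (fst p) < snd p}"
      and u: "0 \<le> u \<and> u \<le> 1"
    have "h ((1 - u) *\<^sub>R fst p + u *\<^sub>R fst q) \<le> (1 - u) * h (fst p) + u * h (fst q)"
      using convex_onD[OF hconv] u by simp
    also have "\<dots> < (1 - u) * snd p + u * snd q"
    proof (cases "u = 0")
      case True then show ?thesis using p by simp
    next
      case False
      then have "u > 0" using u by simp
      then have "u * h (fst q) < u * snd q" using q by simp
      moreover have "(1 - u) * h (fst p) \<le> (1 - u) * snd p"
        using p u by (intro mult_left_mono) auto
      ultimately show ?thesis by simp
    qed
    finally show "(1 - u) *\<^sub>R p + u *\<^sub>R q \<in> {p. h (fst p) < snd p}" by simp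
  qed
  have cvB: "convex B" unfolding B_def convex_alt
  proof (intro ballI allI impI)
    fix p q :: "'a \<times> real" and u :: real
    assume p: "p \<in> {p. n \<bullet> (fst p - z) > 0 \<and> snd p \<le> 0}"
      and q: "q \<in> {p. n \<bullet> (fst p - z) > 0 \<and> snd p \<le> 0}"
      and u: "0 \<le> u \<and> u \<le> 1"
    have eq: "(1 - u) *\<^sub>R fst p + u *\<^sub>R fst q - z = (1 - u) *\<^sub>R (fst p - z) + u *\<^sub>R (fst q - z)"
      by (simp add: algebra_simps)
    have "n \<bullet> ((1 - u) *\<^sub>R fst p + u *\<^sub>R fst q - z) = (1 - u) * (n \<bullet> (fst p - z)) + u * (n \<bullet> (fst q - z))"
      unfolding eq by (simp add: inner_add_right)
    also have "\<dots> > 0"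
    proof (cases "u = 1")
      case True then show ?thesis using q by simp
    next
      case False then have "1 - u > 0" using u by simp
      have "(1 - u) * (n \<bullet> (fst p - z)) > 0" using p \<open>1 - u > 0\<close> by simp
      moreover have "u * (n \<bullet> (fst q - z)) \<ge> 0" using q u by simp
      ultimately show ?thesis by simp
    qed
    finally show "(1 - u) *\<^sub>R p + u *\<^sub>R q \<in> {p. n \<bullet> (fst p - z) > 0 \<and> snd p \<le> 0}"
      using p q u by (simp add: add_nonpos_nonpos mult_nonneg_nonpos)
  qed
  have Ane: "A \<noteq> {}" unfolding A_def by (metis (mono_tags, lifting) empty_iff fst_conv less_add_one mem_Collect_eq snd_conv)
  have Bne: "B \<noteq> {}" proof -
    have "(x, 0) \<in> B" unfolding B_def using nn n_def by simp
    then show ?thesis by blast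
  qed
  have disj: "A \<inter> B = {}"
  proof (rule ccontr)
    assume "A \<inter> B \<noteq> {}"
    then obtain p where "p \<in> A" "p \<in> B" by blast
    then have "fst p \<in> S" "n \<bullet> (fst p - z) > 0" unfolding A_def B_def S_def by auto
    then show False using proj by force
  qed
  obtain w c where w0: "w \<noteq> 0" and wA: "\<forall>p\<in>A. w \<bullet> p \<le> c" and wB: "\<forall>p\<in>B. w \<bullet> p \<ge> c"
    using separating_hyperplane_sets[OF cvA cvB Ane Bne disj] by blast
  obtain a b where ab: "w = (a, b)" by (cases w)
  have iA: "\<And>y r. h y < r \<Longrightarrow> a \<bullet> y + b * r \<le> c" using wA ab A_def by auto
  have iB: "\<And>y. n \<bullet> (y - z) > 0 \<Longrightarrow> a \<bullet> y \<ge> c" using wB ab B_def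
    by (metis (mono_tags, lifting) fst_conv inner_Pair inner_real_def mem_Collect_eq mult_zero_right order_refl snd_conv add_0_right)
  have b0: "b < 0"
  proof (rule ccontr)
    assume "\<not> b < 0"
    then have "b \<ge> 0" by simp
    show False
    proof (cases "b = 0")
      case True
      then have a0: "a \<noteq> 0" using w0 ab by (auto simp: zero_prod_def)
      define y where "y = ((\<bar>c\<bar> + 1) / (a \<bullet> a)) *\<^sub>R a"
      have "a \<bullet> y = \<bar>c\<bar> + 1" unfolding y_def using a0 by simp
      moreover have "a \<bullet> y + b * (h y + 1) \<le> c" using iA by simp
      ultimately show False using True by simp
    next
      case False
      then have bp: "b > 0" using \<open>b \<ge> 0\<close> by simp
      define r where "r = max (h z + 1) ((c - a \<bullet> z) / b + 1)"
      have "a \<bullet> z + b * r \<le> c" using iA r_def by simp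
      moreover have "b * r \<ge> b * ((c - a \<bullet> z) / b + 1)" using bp r_def by (intro mult_left_mono) auto
      moreover have "b * ((c - a \<bullet> z) / b + 1) = c - a \<bullet> z + b" using bp by (simp add: field_simps)
      ultimately show False using bp by simp
    qed
  qed
  have i1: "\<And>y. a \<bullet> y + b * h y \<le> c"
  proof (rule ccontr)
    fix y assume "\<not> a \<bullet> y + b * h y \<le> c"
    then have g: "a \<bullet> y + b * h y - c > 0" by simp
    define d where "d = (a \<bullet> y + b * h y - c) / (- 2 * b)"
    have d0: "d > 0" unfolding d_def using g b0 by (simp add: divide_pos_neg)
    have "a \<bullet> y + b * (h y + d) \<le> c" using iA d0 by simp
    moreover have "2 * (b * d) = c - (a \<bullet> y + b * h y)" unfolding d_def using b0 by (simp add: field_simps)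
    moreover have "a \<bullet> y + b * (h y + d) = a \<bullet> y + b * h y + b * d" by (simp add: distrib_left)
    ultimately show False using g by linarith
  qed
  have azc: "a \<bullet> z \<ge> c"
  proof (rule ccontr)
    assume "\<not> a \<bullet> z \<ge> c"
    then have lt: "a \<bullet> z < c" by simp
    show False
    proof (cases "a \<bullet> n \<le> 0")
      case True
      have "a \<bullet> (z + n) \<ge> c" using iB nn by simp
      then show False using True lt by (simp add: inner_add_right)
    next
      case False
      define e where "e = (c - a \<bullet> z) / (2 * (a \<bullet> n))"
      have e0: "e > 0" unfolding e_def using lt False by simp
      have "a \<bullet> (z + e *\<^sub>R n) \<ge> c" using iB nn e0 by simp
      moreover have "e * (a \<bullet> n) = (c - a \<bullet> z) / 2" unfolding e_def using False by simp
      ultimately show False using lt by (simp add: inner_add_right field_simps)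
    qed
  qed
  have azc2: "a \<bullet> z = c" using azc i1[of z] hz by simp
  have hs: "\<And>v. n \<bullet> v > 0 \<Longrightarrow> a \<bullet> v \<ge> 0"
  proof -
    fix v assume "n \<bullet> v > 0"
    then have "a \<bullet> (z + v) \<ge> c" using iB by simp
    then show "a \<bullet> v \<ge> 0" using azc2 by (simp add: inner_add_right)
  qed
  define t where "t = (a \<bullet> n) / (n \<bullet> n)"
  have at: "a = t *\<^sub>R n" and an0: "a \<bullet> n \<ge> 0" using halfspace_mult[OF n0 hs] t_def by auto
  have t0: "t \<ge> 0" using an0 nn t_def by simp
  define k where "k = t / (- b)"
  define s_z where "s_z = k *\<^sub>R n"
  have k0: "k \<ge> 0" unfolding k_def using t0 b0 by (simp add: divide_nonneg_neg)
  have szsub: "s_z \<in> subdiff h z" unfolding subdiff_def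
  proof (intro CollectI allI)
    fix y
    have "a \<bullet> y + b * h y \<le> a \<bullet> z" using i1 azc2 by simp
    then have "- b * h y \<ge> a \<bullet> (y - z)" by (simp add: inner_diff_right)
    then have "- b * h y \<ge> t * (n \<bullet> (y - z))" using at by simp
    then have "h y \<ge> t * (n \<bullet> (y - z)) / (- b)" using b0 by (simp add: field_simps)
    then show "h y \<ge> h z + s_z \<bullet> (y - z)" using hz unfolding s_z_def k_def by simp
  qed
  have zK: "z \<in> K" using zS SK S_def by auto
  have szs: "norm s_z \<ge> \<sigma>" using lower zK hz szsub by blast
  have szpos: "norm s_z > 0" using szs sigpos by linarith
  have kpos: "k > 0" using szpos k0 s_z_def by (cases "k = 0") auto
  have nsz: "norm s_z = k * norm n" unfolding s_z_def using k0 by simp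
  have nnorm: "norm n > 0" using n0 by simp
  have eq2: "x - z = (norm n / norm s_z) *\<^sub>R s_z"
    unfolding nsz s_z_def n_def using kpos nnorm n_def by simp
  have "h x \<ge> h z + s_z \<bullet> (x - z)" using szsub unfolding subdiff_def by blast
  then have hxge: "h x \<ge> k * (n \<bullet> n)" using hz unfolding s_z_def n_def by simp
  have nnsq: "n \<bullet> n = norm n * norm n" using dot_square_norm[of n] by (simp add: power2_eq_square)
  then have "h x \<ge> norm s_z * norm n" using hxge nsz by simp
  then have g3: "norm n \<le> h x / norm s_z" using szpos by (simp add: field_simps)
  have "h z \<ge> h x + s_x \<bullet> (z - x)" using sx unfolding subdiff_def by blast
  moreover have "h x \<ge> h z + s_z \<bullet> (x - z)" using szsub unfolding subdiff_def by blast
  ultimately have mono: "s_x \<bullet> n \<ge> s_z \<bullet> n" unfolding n_def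
    by (simp add: inner_diff_right algebra_simps)
  have "(norm s_z)\<^sup>2 = k * (s_z \<bullet> n)" unfolding nsz using nnsq by (simp add: s_z_def power2_eq_square)
  also have "\<dots> \<le> k * (s_x \<bullet> n)" using mono k0 by (rule mult_left_mono)
  also have "\<dots> = s_x \<bullet> s_z" unfolding s_z_def by simp
  finally have g4: "(norm s_z)\<^sup>2 \<le> s_x \<bullet> s_z" .
  have "s_x \<bullet> s_z \<le> norm s_x * norm s_z" by (rule norm_cauchy_schwarz)
  then have "norm s_z * norm s_z \<le> norm s_x * norm s_z" using g4 by (simp add: power2_eq_square)
  then have g5: "norm s_x \<ge> norm s_z" using szpos by simp
  show ?thesis
    apply (rule exI[of _ "norm n"], rule exI[of _ s_z])
    using szsub hz eq2 g3 g4 g5 unfolding z_def S_def by simp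
qed

end
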